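(* Let $f:X\to X$ be a homeomorphism of a compact metric space $(X,d)$. If $f$ has a specification point, then $f$ has the specification property.
   Context: $f$ has the specification property if for every $\varepsilon>0$ there is $K>0$ such that for any finite sequence of points $x_0,\dots,x_n\in X$ and integers $a_0\le b_0,\dots,a_n\le b_n$ with $a_{i+1}-b_i\ge K$ for every $i$, there is $y\in X$ with $d(f^j(y),f^j(x_i))<\varepsilon$ for $a_i\le j\le b_i$, $i=0,\dots,n$. A point $x\in X$ is a specification point of $f$ if for every $\varepsilon>0$ there is $K>0$ such that for any finite sequence of points $x=x_0,x_1,\dots,x_n\in X$ (with first point equal to $x$) and integers $a_0\le b_0,\dots,a_n\le b_n$ with $a_{i+1}-b_i\ge K$ for every $i$, there is $y\in X$ with $d(f^j(y),f^j(x_i))<\varepsilon$ for $a_i\le j\le b_i$, $i=0,\dots,n$. *)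

theory Defs
  imports "HOL-Analysis.Analysis"
begin

definition spec_condition ::
  "'a::metric_space set \<Rightarrow> ('a \<Rightarrow> 'a) \<Rightarrow> real \<Rightarrow> nat \<Rightarrow> nat \<Rightarrow> (nat \<Rightarrow> 'a) \<Rightarrow> (nat \<Rightarrow> nat) \<Rightarrow> (nat \<Rightarrow> nat) \<Rightarrow> bool"
  where
  "spec_condition X f \<epsilon> K n x a b \<longleftrightarrow>
     ((\<forall>i\<le>n. x i \<in> X \<and> a i \<le> b i) \<and> (\<forall>i<n. a (Suc i) \<ge> b i + K)) \<longrightarrow>
     (\<exists>y\<in>X. \<forall>i\<le>n. \<forall>j. a i \<le> j \<and> j \<le> b i \<longrightarrow> dist ((f ^^ j) y) ((f ^^ j) (x i)) < \<epsilon>)"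

definition has_specification_property :: "'a::metric_space set \<Rightarrow> ('a \<Rightarrow> 'a) \<Rightarrow> bool" where
  "has_specification_property X f \<longleftrightarrow>
     (\<forall>\<epsilon>>0. \<exists>K>0. \<forall>n x a b. spec_condition X f \<epsilon> K n x a b)"

definition specification_point :: "'a::metric_space set \<Rightarrow> ('a \<Rightarrow> 'a) \<Rightarrow> 'a \<Rightarrow> bool" where
  "specification_point X f p \<longleftrightarrow> p \<in> X \<and>
     (\<forall>\<epsilon>>0. \<exists>K>0. \<forall>n x a b. x 0 = p \<longrightarrow> spec_condition X f \<epsilon> K n x a b)"

end

theory Submission
  imports Defs
begin

lemma funpow_in: "(\<And>x. x \<in> X \<Longrightarrow> h x \<in> X) \<Longrightarrow> x \<in> X \<Longrightarrow> (h ^^ k) x \<in> X"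
  by (induction k) auto

lemma funpow_inv:
  assumes "\<And>x. x \<in> X \<Longrightarrow> g x \<in> X" "\<And>x. x \<in> X \<Longrightarrow> f (g x) = x" "x \<in> X"
  shows "(f ^^ k) ((g ^^ k) x) = x"
proof (induction k)
  case 0 then show ?case by simp
next
  case (Suc k)
  have "(g ^^ k) x \<in> X" using funpow_in[of X g] assms by blast
  then have "(f ^^ Suc k) ((g ^^ Suc k) x) = (f ^^ k) (f (g ((g ^^ k) x)))"
    by (simp only: funpow_Suc_right[of k f] funpow.simps(2)[of k g] o_apply)
  also have "\<dots> = x" using Suc assms(2) \<open>(g ^^ k) x \<in> X\<close> by simp
  finally show ?case .
qed

theorem proposition7p1:
  fixes X :: "'a::metric_space set" and f :: "'a \<Rightarrow> 'a"
  assumes "compact X"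
    and "\<exists>g. homeomorphism X X f g"
    and "\<exists>p. specification_point X f p"
  shows "has_specification_property X f"
proof -
  obtain g where hg: "homeomorphism X X f g" using assms(2) by blast
  have fX: "\<And>x. x \<in> X \<Longrightarrow> f x \<in> X" and gX: "\<And>x. x \<in> X \<Longrightarrow> g x \<in> X"
    and fg: "\<And>x. x \<in> X \<Longrightarrow> f (g x) = x"
    using hg unfolding homeomorphism_def by auto
  obtain p where sp: "specification_point X f p" using assms(3) by blast
  have pX: "p \<in> X" using sp unfolding specification_point_def by blast
  show ?thesis unfolding has_specification_property_def
  proof (intro allI impI)
    fix \<epsilon> :: real assume "\<epsilon> > 0"
    then obtain K where K: "K > 0" and HK: "\<And>n x a b. x 0 = p \<Longrightarrow> spec_condition X f \<epsilon> K n x a b"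
      using sp unfolding specification_point_def by blast
    have "\<forall>n x a b. spec_condition X f \<epsilon> K n x a b"
    proof (intro allI)
      fix n x a b
      show "spec_condition X f \<epsilon> K n x a b" unfolding spec_condition_def
      proof (intro impI)
        assume H: "(\<forall>i\<le>n. x i \<in> X \<and> a i \<le> b i) \<and> (\<forall>i<n. b i + K \<le> a (Suc i))"
        define x' where "x' i = (if i = 0 then p else (g ^^ K) (x (i - 1)))" for i
        define a' where "a' i = (if i = 0 then 0 else a (i - 1) + K)" for i
        define b' where "b' i = (if i = 0 then 0 else b (i - 1) + K)" for i
        have c: "spec_condition X f \<epsilon> K (Suc n) x' a' b'" using HK x'_def by simp
        have pre: "(\<forall>i\<le>Suc n. x' i \<in> X \<and> a' i \<le> b' i) \<and> (\<forall>i<Suc n. b' i + K \<le> a' (Suc i))"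
        proof (intro conjI allI impI)
          fix i assume "i \<le> Suc n"
          then show "x' i \<in> X" using H pX funpow_in[of X g, OF gX] unfolding x'_def by auto
          show "a' i \<le> b' i" using H \<open>i \<le> Suc n\<close> unfolding a'_def b'_def by auto
        next
          fix i assume "i < Suc n"
          then show "b' i + K \<le> a' (Suc i)" using H unfolding a'_def b'_def
            by (cases i) auto
        qed
        obtain y' where y'X: "y' \<in> X" and hy: "\<forall>i\<le>Suc n. \<forall>j. a' i \<le> j \<and> j \<le> b' i \<longrightarrow>
            dist ((f ^^ j) y') ((f ^^ j) (x' i)) < \<epsilon>"
          using c pre unfolding spec_condition_def by blast
        show "\<exists>y\<in>X. \<forall>i\<le>n. \<forall>j. a i \<le> j \<and> j \<le> b i \<longrightarrow> dist ((f ^^ j) y) ((f ^^ j) (x i)) < \<epsilon>"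
        proof (intro bexI allI impI)
          show "(f ^^ K) y' \<in> X" using funpow_in[of X f, OF fX] y'X by blast
          fix i j assume i: "i \<le> n" and j: "a i \<le> j \<and> j \<le> b i"
          have "dist ((f ^^ (j + K)) y') ((f ^^ (j + K)) (x' (Suc i))) < \<epsilon>"
            using hy[rule_format, of "Suc i" "j + K"] i j unfolding a'_def b'_def by auto
          moreover have "(f ^^ (j + K)) y' = (f ^^ j) ((f ^^ K) y')" by (simp add: funpow_add)
          moreover have "(f ^^ (j + K)) (x' (Suc i)) = (f ^^ j) (x i)"
            using funpow_inv[of X g f, OF gX fg] H i unfolding x'_def by (simp add: funpow_add)
          ultimately show "dist ((f ^^ j) ((f ^^ K) y')) ((f ^^ j) (x i)) < \<epsilon>" by simp
        qed
      qed
    qed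
    then show "\<exists>K>0. \<forall>n x a b. spec_condition X f \<epsilon> K n x a b" using K by blast
  qed
qed

end
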